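(* The generating function $$F_{(213,312)}(x,p,q,u,v,s,t)=\sum_{n\ge0}\ \sum_{\pi\in S_n(213,312)} x^n p^{\operatorname{asc}(\pi)}q^{\operatorname{des}(\pi)}u^{\operatorname{lrmax}(\pi)}v^{\operatorname{rlmax}(\pi)}s^{\operatorname{lrmin}(\pi)}t^{\operatorname{rlmin}(\pi)}$$ is equal to $$1 + xuvst + \frac{p q s t^2 u^2 v^2 x^3}{(-1 + p t u x) (-1 + p u x + q v x)} + \frac{q s^2 t u v^2 x^2}{1 - q s v x} + \frac{p s t^2 u^2 v x^2}{1 - p t u x} + \frac{p q s^2 t u^2 v^2 x^3}{(-1 + p u x + q v x) (-1 + q s v x)}.$$
   Context: For $n\ge 0$, $S_n$ denotes the set of permutations $\pi=\pi_1\cdots\pi_n$ of $[n]=\{1,\dots,n\}$ ($S_0$ consists of the empty permutation, for which all statistics are $0$). $\pi$ avoids a pattern $\tau\in S_k$ if no subsequence $\pi_{i_1}\cdots\pi_{i_k}$ ($i_1<\dots<i_k$) satisfies $\pi_{i_a}<\pi_{i_b}\iff\tau_a<\tau_b$; $S_n(\tau,\rho)$ is the set of permutations in $S_n$ avoiding both $\tau$ and $\rho$. $\operatorname{asc}(\pi)$ (resp. $\operatorname{des}(\pi)$) is the number of $i\in[n-1]$ with $\pi_i<\pi_{i+1}$ (resp. $\pi_i>\pi_{i+1}$). $\pi_i$ is a left-to-right maximum (resp. minimum) if it is larger (resp. smaller) than every $\pi_j$ with $j<i$, and a right-to-left maximum (resp. minimum) if it is larger (resp. smaller) than every $\pi_j$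 with $j>i$; $\operatorname{lrmax},\operatorname{lrmin},\operatorname{rlmax},\operatorname{rlmin}$ count these. *)

theory Defs
  imports "HOL-Combinatorics.Multiset_Permutations" "HOL-Computational_Algebra.Formal_Power_Series"
begin

text \<open>Permutations of [n] are lists w = [pi_1,...,pi_n] (0-indexed positions).\<close>

definition perms :: "nat \<Rightarrow> nat list set" where
  "perms n = permutations_of_set {1..n}"

definition contains_pattern :: "nat list \<Rightarrow> nat list \<Rightarrow> bool" where
  "contains_pattern tau w \<longleftrightarrow>
     (\<exists>is. length is = length tau \<and> sorted_wrt (<) is \<and> (\<forall>j\<in>set is. j < length w) \<and>
        (\<forall>a<length tau. \<forall>b<length tau. w ! (is ! a) < w ! (is ! b) \<longleftrightarrow> tau ! a < tau ! b))"

definition avoids :: "nat list \<Rightarrow> nat list \<Rightarrow> bool" where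
  "avoids w tau \<longleftrightarrow> \<not> contains_pattern tau w"

definition av2 :: "nat \<Rightarrow> nat list \<Rightarrow> nat list \<Rightarrow> nat list set" where
  "av2 n tau rho = {w \<in> perms n. avoids w tau \<and> avoids w rho}"

definition asc :: "nat list \<Rightarrow> nat" where
  "asc w = card {i. i + 1 < length w \<and> w ! i < w ! (i + 1)}"

definition des :: "nat list \<Rightarrow> nat" where
  "des w = card {i. i + 1 < length w \<and> w ! i > w ! (i + 1)}"

definition lrmax :: "nat list \<Rightarrow> nat" where
  "lrmax w = card {i. i < length w \<and> (\<forall>j<i. w ! j < w ! i)}"

definition lrmin :: "nat list \<Rightarrow> nat" where
  "lrmin w = card {i. i < length w \<and> (\<forall>j<i. w ! j > w ! i)}"

definition rlmax :: "nat list \<Rightarrow> nat" where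
  "rlmax w = card {i. i < length w \<and> (\<forall>j. i < j \<and> j < length w \<longrightarrow> w ! j < w ! i)}"

definition rlmin :: "nat list \<Rightarrow> nat" where
  "rlmin w = card {i. i < length w \<and> (\<forall>j. i < j \<and> j < length w \<longrightarrow> w ! j > w ! i)}"

text \<open>Generating function as a formal power series in x, with the remaining
  variables specialised to arbitrary elements of a field.\<close>

definition genfun :: "nat list \<Rightarrow> nat list \<Rightarrow> 'a::field \<Rightarrow> 'a \<Rightarrow> 'a \<Rightarrow> 'a \<Rightarrow> 'a \<Rightarrow> 'a \<Rightarrow> 'a fps" where
  "genfun tau rho p q u v s t = Abs_fps (\<lambda>n. \<Sum>w\<in>av2 n tau rho.
      p ^ asc w * q ^ des w * u ^ lrmax w * v ^ rlmax w * s ^ lrmin w * t ^ rlmin w)"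

end

theory Submission
  imports Defs
begin

definition valley :: "nat list \<Rightarrow> bool" where
  "valley w \<longleftrightarrow> (\<exists>i j k. i < j \<and> j < k \<and> k < length w \<and> w!j < w!i \<and> w!j < w!k)"

lemma less3_cases: "(a::nat) < 3 \<Longrightarrow> a = 0 \<or> a = 1 \<or> a = 2" by auto

lemma contains_valley:
  assumes "contains_pattern tau w" "tau = [2,1,3] \<or> tau = [3,1,2]"
  shows "valley w"
proof -
  obtain "is" where L: "length is = length tau" and S: "sorted_wrt (<) is"
    and B: "\<forall>j\<in>set is. j < length w"
    and C: "\<forall>a<length tau. \<forall>b<length tau. w ! (is ! a) < w ! (is ! b) \<longleftrightarrow> tau ! a < tau ! b"
    using assms(1) unfolding contains_pattern_def by blast
  have l3: "length is = 3" using L assms(2) by auto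
  have o1: "is!0 < is!1" "is!1 < is!2" using S l3 by (auto simp: sorted_wrt_iff_nth_less)
  have b2: "is!2 < length w" using B l3 by auto
  have c: "w!(is!1) < w!(is!0)" "w!(is!1) < w!(is!2)"
    using C[rule_format, of 1 0] C[rule_format, of 1 2] assms(2) by auto
  show ?thesis unfolding valley_def using o1 b2 c by blast
qed

lemma valley_contains:
  assumes "distinct w" "valley w"
  shows "contains_pattern [2,1,3] w \<or> contains_pattern [3,1,2] w"
proof -
  obtain i j k where o: "i < j" "j < k" "k < length w" "w!j < w!i" "w!j < w!k"
    using assms(2) unfolding valley_def by blast
  have ne: "w!i \<noteq> w!k" using assms(1) o by (simp add: nth_eq_iff_index_eq)
  have sw: "sorted_wrt (<) [i,j,k]" using o by auto
  have bd: "\<forall>x\<in>set [i,j,k]. x < length w" using o by auto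
  show ?thesis
  proof (cases "w!i < w!k")
    case True
    have "\<forall>a<3. \<forall>b<3. w ! ([i,j,k] ! a) < w ! ([i,j,k] ! b) \<longleftrightarrow> [2::nat,1,3] ! a < [2,1,3] ! b"
      using True o by (auto dest!: less3_cases)
    then have "contains_pattern [2,1,3] w" unfolding contains_pattern_def
      using sw bd by (intro exI[of _ "[i,j,k]"]) auto
    then show ?thesis by blast
  next
    case False
    then have F: "w!k < w!i" using ne by auto
    have "\<forall>a<3. \<forall>b<3. w ! ([i,j,k] ! a) < w ! ([i,j,k] ! b) \<longleftrightarrow> [3::nat,1,2] ! a < [3,1,2] ! b"
      using F o by (auto dest!: less3_cases)
    then have "contains_pattern [3,1,2] w" unfolding contains_pattern_def
      using sw bd by (intro exI[of _ "[i,j,k]"]) auto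
    then show ?thesis by blast
  qed
qed

definition V :: "nat \<Rightarrow> nat list set" where
  "V n = {w. set w = {1..n} \<and> distinct w \<and> \<not> valley w}"

lemma av2_V: "av2 n [2,1,3] [3,1,2] = V n"
  unfolding av2_def V_def perms_def permutations_of_set_def avoids_def
  using contains_valley valley_contains by blast

lemma valley_cons1: "valley (1 # map Suc s) \<longleftrightarrow> valley s"
proof
  assume "valley (1 # map Suc s)"
  then obtain i j k where o: "i < j" "j < k" "k < Suc (length s)"
     "(1 # map Suc s)!j < (1 # map Suc s)!i" "(1 # map Suc s)!j < (1 # map Suc s)!k"
    unfolding valley_def by auto
  obtain j' where j: "j = Suc j'" using o by (cases j) auto
  obtain k' where k: "k = Suc k'" using o by (cases k) auto
  have "i \<noteq> 0"
  proof
    assume "i = 0" then show False using o(2,3,4) j by simp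
  qed
  then obtain i' where i: "i = Suc i'" by (cases i) auto
  show "valley s" unfolding valley_def using o i j k by (intro exI[of _ i'] exI[of _ j'] exI[of _ k']) auto
next
  assume "valley s"
  then obtain i j k where o: "i < j" "j < k" "k < length s" "s!j < s!i" "s!j < s!k"
    unfolding valley_def by auto
  show "valley (1 # map Suc s)" unfolding valley_def using o
    by (intro exI[of _ "Suc i"] exI[of _ "Suc j"] exI[of _ "Suc k"]) auto
qed

lemma valley_snoc1: "valley (map Suc s @ [1]) \<longleftrightarrow> valley s"
proof
  assume "valley (map Suc s @ [1])"
  then obtain i j k where o: "i < j" "j < k" "k < Suc (length s)"
     "(map Suc s @ [1])!j < (map Suc s @ [1])!i" "(map Suc s @ [1])!j < (map Suc s @ [1])!k"
    unfolding valley_def by auto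
  have "k \<noteq> length s" using o by (auto simp: nth_append)
  then have "k < length s" using o by auto
  then show "valley s" unfolding valley_def using o
    by (intro exI[of _ i] exI[of _ j] exI[of _ k]) (auto simp: nth_append)
next
  assume "valley s"
  then obtain i j k where o: "i < j" "j < k" "k < length s" "s!j < s!i" "s!j < s!k"
    unfolding valley_def by auto
  show "valley (map Suc s @ [1])" unfolding valley_def using o
    by (intro exI[of _ i] exI[of _ j] exI[of _ k]) (auto simp: nth_append)
qed

lemma map_Suc_pred: "\<forall>x\<in>set xs. x > 0 \<Longrightarrow> map Suc (map (\<lambda>x. x - 1) xs) = xs"
  by (induction xs) auto

lemma set_map_Suc: "set (map Suc s) = {2..Suc n} \<longleftrightarrow> set s = {1..n}"
proof -
  have "{2..Suc n} = Suc ` {1..n}" by (simp add: image_Suc_atLeastAtMost)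
  then show ?thesis by (simp only: set_map) (rule inj_image_eq_iff[OF inj_Suc])
qed

lemma V_Suc:
  assumes "n \<ge> 1"
  shows "V (Suc n) = (\<lambda>s. 1 # map Suc s) ` V n \<union> (\<lambda>s. map Suc s @ [1]) ` V n"
proof (rule set_eqI, rule iffI)
  fix w assume "w \<in> V (Suc n)"
  then have sw: "set w = {1..Suc n}" and dw: "distinct w" and vw: "\<not> valley w"
    unfolding V_def by auto
  have lw: "length w = Suc n" using distinct_card[OF dw] sw by simp
  have "1 \<in> set w" using sw by simp
  then obtain j where j: "j < length w" "w!j = 1" by (auto simp: in_set_conv_nth)
  have gt1: "w!i > 1" if "i < length w" "i \<noteq> j" for i
  proof -
    have "w!i \<noteq> 1" using dw j that by (metis nth_eq_iff_index_eq)
    moreover have "w!i \<in> {1..Suc n}" using that sw nth_mem by metis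
    ultimately show ?thesis by simp
  qed
  have "j = 0 \<or> j = n"
  proof (rule ccontr)
    assume "\<not> ?thesis"
    then have "0 < j" "j < n" using j lw by auto
    then have "valley w" unfolding valley_def using gt1 j lw
      by (intro exI[of _ 0] exI[of _ j] exI[of _ n]) auto
    then show False using vw by simp
  qed
  then show "w \<in> (\<lambda>s. 1 # map Suc s) ` V n \<union> (\<lambda>s. map Suc s @ [1]) ` V n"
  proof
    assume j0: "j = 0"
    obtain r where w: "w = 1 # r" using j j0 by (cases w) auto
    define s where "s = map (\<lambda>x. x - 1) r"
    have "\<forall>x\<in>set r. x > 1"
    proof
      fix x assume "x \<in> set r"
      then obtain i where "i < length r" "r!i = x" by (auto simp: in_set_conv_nth)
      then show "x > 1" using gt1[of "Suc i"] w j0 by auto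
    qed
    then have r: "r = map Suc s" unfolding s_def by (subst map_Suc_pred) auto
    have "set r = set w - {1}" using dw w by auto
    also have "\<dots> = {2..Suc n}" unfolding sw by (rule set_eqI) (simp, linarith)
    finally have "set (map Suc s) = {2..Suc n}" using r by simp
    then have "set s = {1..n}" using set_map_Suc by blast
    moreover have "distinct s" using dw w r by (simp add: distinct_map)
    moreover have "\<not> valley s" using vw w r valley_cons1 by simp
    ultimately have sV: "s \<in> V n" unfolding V_def by blast
    show ?thesis by (rule UnI1, rule image_eqI[of _ _ s]) (simp_all add: w r sV)
  next
    assume jn: "j = n"
    have wne: "w \<noteq> []" using lw by auto
    have "last w = 1" using j jn lw wne by (simp add: last_conv_nth)
    then have w: "w = butlast w @ [1]" using append_butlast_last_id[OF wne] by simp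
    define r where "r = butlast w"
    have w: "w = r @ [1]" using w r_def by simp
    define s where "s = map (\<lambda>x. x - 1) r"
    have "\<forall>x\<in>set r. x > 1"
    proof
      fix x assume "x \<in> set r"
      then obtain i where i: "i < length r" "r!i = x" by (auto simp: in_set_conv_nth)
      have "length r = n" using w lw by simp
      then show "x > 1" using gt1[of i] w jn i by (simp add: nth_append)
    qed
    then have r: "r = map Suc s" unfolding s_def by (subst map_Suc_pred) auto
    have "set r = set w - {1}" using dw w by auto
    also have "\<dots> = {2..Suc n}" unfolding sw by (rule set_eqI) (simp, linarith)
    finally have "set (map Suc s) = {2..Suc n}" using r by simp
    then have "set s = {1..n}" using set_map_Suc by blast
    moreover have "distinct s" using dw w r by (simp add: distinct_map)
    moreover have "\<not> valley s" using vw w r valley_snoc1 by simp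
    ultimately have sV: "s \<in> V n" unfolding V_def by blast
    show ?thesis by (rule UnI2, rule image_eqI[of _ _ s]) (simp_all add: w r sV)
  qed
next
  fix w assume "w \<in> (\<lambda>s. 1 # map Suc s) ` V n \<union> (\<lambda>s. map Suc s @ [1]) ` V n"
  then obtain s where s: "set s = {1..n}" "distinct s" "\<not> valley s"
    and w: "w = 1 # map Suc s \<or> w = map Suc s @ [1]" unfolding V_def by auto
  have "set (map Suc s) = {2..Suc n}" using s set_map_Suc by blast
  then have st: "set (map Suc s) = {2..Suc n}" .
  have e: "{1..Suc n} = insert 1 {2..Suc n}" by (rule set_eqI) (simp, linarith)
  have n1: "1 \<notin> set (map Suc s)" using st by simp
  have dm: "distinct (map Suc s)" using s(2) by (simp add: distinct_map)
  from w show "w \<in> V (Suc n)"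
  proof
    assume w1: "w = 1 # map Suc s"
    have "set w = {1..Suc n}" using w1 st e by simp
    moreover have "distinct w" using w1 n1 dm by simp
    moreover have "\<not> valley w" using w1 s(3) valley_cons1 by simp
    ultimately show ?thesis unfolding V_def by blast
  next
    assume w1: "w = map Suc s @ [1]"
    have "set w = {1..Suc n}" using w1 st e by simp
    moreover have "distinct w" using w1 n1 dm by simp
    moreover have "\<not> valley w" using w1 s(3) valley_snoc1 by simp
    ultimately show ?thesis unfolding V_def by blast
  qed
qed

lemma fin1: "finite {i::nat. i + 1 < n \<and> P i}"
  by (rule finite_subset[of _ "{..<n}"]) auto
lemma fin2: "finite {i::nat. i < n \<and> P i}"
  by (rule finite_subset[of _ "{..<n}"]) auto

lemma card_ins0: "finite T \<Longrightarrow> card (insert 0 (Suc ` T)) = Suc (card T)"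
  by (subst card_insert_disjoint) (auto simp: card_image)
lemma card_SucI: "card (Suc ` T) = card T"
  by (simp add: card_image)

lemma all_shift1: "(\<forall>j. Suc x < j \<and> j < Suc m \<longrightarrow> Q j) \<longleftrightarrow> (\<forall>j. x < j \<and> j < m \<longrightarrow> Q (Suc j))"
  by (metis Suc_less_eq less_Suc_eq_0_disj less_nat_zero_code)
lemma all_shift0: "(\<forall>j. 0 < j \<and> j < Suc m \<longrightarrow> Q j) \<longleftrightarrow> (\<forall>j<m. Q (Suc j))"
  by (metis Suc_less_eq less_Suc_eq_0_disj zero_less_Suc less_irrefl)
lemma all_last: "x < m \<Longrightarrow> (\<forall>j. x < j \<and> j < Suc m \<longrightarrow> Q j) \<longleftrightarrow> (Q m \<and> (\<forall>j. x < j \<and> j < m \<longrightarrow> Q j))"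
  by (auto simp: less_Suc_eq)

context
  fixes s :: "nat list"
  assumes ne: "s \<noteq> []" and nz: "0 \<notin> set s"
begin

lemma pos[simp]: "i < length s \<Longrightarrow> 0 < s!i"
  using nz nth_mem by (metis gr0I)

lemma asc_cons: "asc (1 # map Suc s) = Suc (asc s)"
proof -
  have E: "{i. i + 1 < length (1 # map Suc s) \<and> (1 # map Suc s) ! i < (1 # map Suc s) ! (i + 1)}
    = insert 0 (Suc ` {i. i + 1 < length s \<and> s ! i < s ! (i + 1)})"
    using ne by (rule_tac set_eqI, case_tac x) auto
  show ?thesis unfolding asc_def E by (rule card_ins0) (rule fin1)
qed

lemma des_cons: "des (1 # map Suc s) = des s"
proof -
  have E: "{i. i + 1 < length (1 # map Suc s) \<and> (1 # map Suc s) ! i > (1 # map Suc s) ! (i + 1)}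
    = Suc ` {i. i + 1 < length s \<and> s ! i > s ! (i + 1)}"
    using ne by (rule_tac set_eqI, case_tac x) auto
  show ?thesis unfolding des_def E by (rule card_SucI)
qed

lemma lrmax_cons: "lrmax (1 # map Suc s) = Suc (lrmax s)"
proof -
  have E: "{i. i < length (1 # map Suc s) \<and> (\<forall>j<i. (1 # map Suc s) ! j < (1 # map Suc s) ! i)}
    = insert 0 (Suc ` {i. i < length s \<and> (\<forall>j<i. s ! j < s ! i)})"
    by (rule_tac set_eqI, case_tac x) (auto simp: All_less_Suc2)
  show ?thesis unfolding lrmax_def E by (rule card_ins0) (rule fin2)
qed

lemma rlmax_cons: "rlmax (1 # map Suc s) = rlmax s"
proof -
  have E: "{i. i < length (1 # map Suc s) \<and> (\<forall>j. i < j \<and> j < length (1 # map Suc s) \<longrightarrow> (1 # map Suc s) ! j < (1 # map Suc s) ! i)}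
    = Suc ` {i. i < length s \<and> (\<forall>j. i < j \<and> j < length s \<longrightarrow> s ! j < s ! i)}"
    using ne by (rule_tac set_eqI, case_tac x) (auto simp: all_shift1 all_shift0)
  show ?thesis unfolding rlmax_def E by (rule card_SucI)
qed

lemma lrmin_cons: "lrmin (1 # map Suc s) = 1"
proof -
  have E: "{i. i < length (1 # map Suc s) \<and> (\<forall>j<i. (1 # map Suc s) ! j > (1 # map Suc s) ! i)} = {0}"
    by (rule_tac set_eqI, case_tac x) (auto simp: All_less_Suc2)
  show ?thesis unfolding lrmin_def E by simp
qed

lemma rlmin_cons: "rlmin (1 # map Suc s) = Suc (rlmin s)"
proof -
  have E: "{i. i < length (1 # map Suc s) \<and> (\<forall>j. i < j \<and> j < length (1 # map Suc s) \<longrightarrow> (1 # map Suc s) ! j > (1 # map Suc s) ! i)}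
    = insert 0 (Suc ` {i. i < length s \<and> (\<forall>j. i < j \<and> j < length s \<longrightarrow> s ! j > s ! i)})"
    by (rule_tac set_eqI, case_tac x) (auto simp: all_shift1 all_shift0)
  show ?thesis unfolding rlmin_def E by (rule card_ins0) (rule fin2)
qed

lemma asc_snoc: "asc (map Suc s @ [1]) = asc s"
proof -
  have E: "{i. i + 1 < length (map Suc s @ [1]) \<and> (map Suc s @ [1]) ! i < (map Suc s @ [1]) ! (i + 1)}
    = {i. i + 1 < length s \<and> s ! i < s ! (i + 1)}"
  proof (rule set_eqI)
    fix x show "x \<in> {i. i + 1 < length (map Suc s @ [1]) \<and> (map Suc s @ [1]) ! i < (map Suc s @ [1]) ! (i + 1)}
      \<longleftrightarrow> x \<in> {i. i + 1 < length s \<and> s ! i < s ! (i + 1)}"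
      by (cases "x + 1 = length s") (auto simp: nth_append)
  qed
  show ?thesis unfolding asc_def E ..
qed

lemma des_snoc: "des (map Suc s @ [1]) = Suc (des s)"
proof -
  have E: "{i. i + 1 < length (map Suc s @ [1]) \<and> (map Suc s @ [1]) ! i > (map Suc s @ [1]) ! (i + 1)}
    = insert (length s - 1) {i. i + 1 < length s \<and> s ! i > s ! (i + 1)}"
  proof (rule set_eqI)
    fix x show "x \<in> {i. i + 1 < length (map Suc s @ [1]) \<and> (map Suc s @ [1]) ! i > (map Suc s @ [1]) ! (i + 1)}
      \<longleftrightarrow> x \<in> insert (length s - 1) {i. i + 1 < length s \<and> s ! i > s ! (i + 1)}"
      using ne by (cases "x + 1 = length s") (auto simp: nth_append)
  qed
  show ?thesis unfolding des_def E by (rule card_insert_disjoint[OF fin1]) auto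
qed

lemma lrmax_snoc: "lrmax (map Suc s @ [1]) = lrmax s"
proof -
  have E: "{i. i < length (map Suc s @ [1]) \<and> (\<forall>j<i. (map Suc s @ [1]) ! j < (map Suc s @ [1]) ! i)}
    = {i. i < length s \<and> (\<forall>j<i. s ! j < s ! i)}"
  proof (rule set_eqI)
    fix x show "x \<in> {i. i < length (map Suc s @ [1]) \<and> (\<forall>j<i. (map Suc s @ [1]) ! j < (map Suc s @ [1]) ! i)}
      \<longleftrightarrow> x \<in> {i. i < length s \<and> (\<forall>j<i. s ! j < s ! i)}"
    proof (cases "x = length s")
      case True
      have "\<not> (map Suc s @ [1]) ! 0 < (map Suc s @ [1]) ! x" using ne True by (simp add: nth_append)
      then show ?thesis using True ne by auto
    next
      case False
      then show ?thesis by (auto simp: nth_append)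
    qed
  qed
  show ?thesis unfolding lrmax_def E ..
qed

lemma rlmax_snoc: "rlmax (map Suc s @ [1]) = Suc (rlmax s)"
proof -
  have E: "{i. i < length (map Suc s @ [1]) \<and> (\<forall>j. i < j \<and> j < length (map Suc s @ [1]) \<longrightarrow> (map Suc s @ [1]) ! j < (map Suc s @ [1]) ! i)}
    = insert (length s) {i. i < length s \<and> (\<forall>j. i < j \<and> j < length s \<longrightarrow> s ! j < s ! i)}"
  proof (rule set_eqI)
    fix x show "x \<in> {i. i < length (map Suc s @ [1]) \<and> (\<forall>j. i < j \<and> j < length (map Suc s @ [1]) \<longrightarrow> (map Suc s @ [1]) ! j < (map Suc s @ [1]) ! i)}
      \<longleftrightarrow> x \<in> insert (length s) {i. i < length s \<and> (\<forall>j. i < j \<and> j < length s \<longrightarrow> s ! j < s ! i)}"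
    proof (cases "x < length s")
      case True
      then show ?thesis by (simp add: all_last nth_append)
    next
      case False
      then show ?thesis by (auto simp: nth_append)
    qed
  qed
  show ?thesis unfolding rlmax_def E by (rule card_insert_disjoint) (auto intro: fin2)
qed

lemma lrmin_snoc: "lrmin (map Suc s @ [1]) = Suc (lrmin s)"
proof -
  have E: "{i. i < length (map Suc s @ [1]) \<and> (\<forall>j<i. (map Suc s @ [1]) ! j > (map Suc s @ [1]) ! i)}
    = insert (length s) {i. i < length s \<and> (\<forall>j<i. s ! j > s ! i)}"
  proof (rule set_eqI)
    fix x show "x \<in> {i. i < length (map Suc s @ [1]) \<and> (\<forall>j<i. (map Suc s @ [1]) ! j > (map Suc s @ [1]) ! i)}
      \<longleftrightarrow> x \<in> insert (length s) {i. i < length s \<and> (\<forall>j<i. s ! j > s ! i)}"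
    proof (cases "x = length s")
      case True
      then show ?thesis by (auto simp: nth_append)
    next
      case False
      then show ?thesis by (auto simp: nth_append)
    qed
  qed
  show ?thesis unfolding lrmin_def E by (rule card_insert_disjoint) (auto intro: fin2)
qed

lemma rlmin_snoc: "rlmin (map Suc s @ [1]) = 1"
proof -
  have E: "{i. i < length (map Suc s @ [1]) \<and> (\<forall>j. i < j \<and> j < length (map Suc s @ [1]) \<longrightarrow> (map Suc s @ [1]) ! j > (map Suc s @ [1]) ! i)}
    = {length s}"
  proof (rule set_eqI)
    fix x show "x \<in> {i. i < length (map Suc s @ [1]) \<and> (\<forall>j. i < j \<and> j < length (map Suc s @ [1]) \<longrightarrow> (map Suc s @ [1]) ! j > (map Suc s @ [1]) ! i)}
      \<longleftrightarrow> x \<in> {length s}"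
    proof (cases "x < length s")
      case True
      then show ?thesis by (simp add: all_last nth_append)
    next
      case False
      then show ?thesis by (auto simp: nth_append)
    qed
  qed
  show ?thesis unfolding rlmin_def E by simp
qed

end


definition Wt :: "'a::field \<Rightarrow> 'a \<Rightarrow> 'a \<Rightarrow> 'a \<Rightarrow> 'a \<Rightarrow> 'a \<Rightarrow> nat list \<Rightarrow> 'a" where
  "Wt p q u v s t w = p ^ asc w * q ^ des w * u ^ lrmax w * v ^ rlmax w * s ^ lrmin w * t ^ rlmin w"

definition FF :: "'a::field \<Rightarrow> 'a \<Rightarrow> 'a \<Rightarrow> 'a \<Rightarrow> nat \<Rightarrow> 'a \<Rightarrow> 'a \<Rightarrow> 'a" where
  "FF p q u v n s t = (\<Sum>w\<in>V n. Wt p q u v s t w)"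

lemma genfun_FF: "genfun [2,1,3] [3,1,2] p q u v s t = Abs_fps (\<lambda>n. FF p q u v n s t)"
  unfolding genfun_def FF_def Wt_def av2_V ..

lemma finite_V: "finite (V n)"
proof -
  have "V n \<subseteq> permutations_of_set {1..n}" unfolding V_def permutations_of_set_def by auto
  then show ?thesis by (rule finite_subset) simp
qed

lemma V0: "V 0 = {[]}" unfolding V_def valley_def by auto

lemma V1: "V 1 = {[1]}"
proof -
  have "w = [1]" if "set w = {1}" "distinct w" for w :: "nat list"
  proof -
    have "length w = 1" using distinct_card[OF that(2)] that(1) by simp
    then obtain a where "w = [a]" by (cases w) auto
    then show ?thesis using that by simp
  qed
  then show ?thesis unfolding V_def valley_def by auto
qed

lemma FF0: "FF p q u v 0 s t = 1"
  unfolding FF_def V0 Wt_def asc_def des_def lrmax_def rlmax_def lrmin_def rlmin_def by simp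

lemma FF1: "FF p q u v 1 s t = u * v * s * t"
proof -
  have a: "{i::nat. i < Suc 0 \<and> P i} = (if P 0 then {0} else {})" for P by auto
  have b: "{i::nat. i = 0 \<and> P i} = (if P 0 then {0} else {})" for P by auto
  show ?thesis
    unfolding FF_def V1 Wt_def asc_def des_def lrmax_def rlmax_def lrmin_def rlmin_def
    by (simp add: a b)
qed

lemma FF_Suc:
  assumes n: "n \<ge> 1"
  shows "FF p q u v (Suc n) s t = p*u*s*t * FF p q u v n 1 t + q*v*s*t * FF p q u v n s 1"
proof -
  let ?f = "\<lambda>s. 1 # map Suc s" and ?g = "\<lambda>s. map Suc s @ [1]"
  have props: "s' \<noteq> [] \<and> 0 \<notin> set s'" if "s' \<in> V n" for s'
    using that n unfolding V_def by auto
  have disj: "?f ` V n \<inter> ?g ` V n = {}"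
  proof (rule ccontr)
    assume "?f ` V n \<inter> ?g ` V n \<noteq> {}"
    then obtain a b where ab: "a \<in> V n" "b \<in> V n" "?f a = ?g b" by auto
    have "b \<noteq> []" "0 \<notin> set b" using props[OF ab(2)] by auto
    then have "hd (?g b) \<noteq> 1" by (cases b) auto
    then show False using ab(3) by (metis list.sel(1))
  qed
  have injf: "inj_on ?f (V n)" by (rule inj_onI) (simp add: inj_map_eq_map)
  have injg: "inj_on ?g (V n)" by (rule inj_onI) (simp add: inj_map_eq_map)
  have "FF p q u v (Suc n) s t = (\<Sum>w\<in>?f ` V n. Wt p q u v s t w) + (\<Sum>w\<in>?g ` V n. Wt p q u v s t w)"
    unfolding FF_def V_Suc[OF n] by (rule sum.union_disjoint[OF finite_imageI[OF finite_V] finite_imageI[OF finite_V] disj])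
  also have "(\<Sum>w\<in>?f ` V n. Wt p q u v s t w) = (\<Sum>w\<in>V n. Wt p q u v s t (?f w))"
    by (rule sum.reindex_cong[OF injf refl refl])
  also have "\<dots> = (\<Sum>w\<in>V n. p*u*s*t * Wt p q u v 1 t w)"
  proof (rule sum.cong[OF refl])
    fix w assume "w \<in> V n"
    then have a: "w \<noteq> []" and b: "0 \<notin> set w" using props by auto
    then show "Wt p q u v s t (?f w) = p*u*s*t * Wt p q u v 1 t w"
      unfolding Wt_def asc_cons[OF a b] des_cons[OF a b] lrmax_cons[OF a b] rlmax_cons[OF a b] lrmin_cons[OF a b] rlmin_cons[OF a b] by (simp add: algebra_simps)
  qed
  also have "(\<Sum>w\<in>?g ` V n. Wt p q u v s t w) = (\<Sum>w\<in>V n. Wt p q u v s t (?g w))"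
    by (rule sum.reindex_cong[OF injg refl refl])
  also have "\<dots> = (\<Sum>w\<in>V n. q*v*s*t * Wt p q u v s 1 w)"
  proof (rule sum.cong[OF refl])
    fix w assume "w \<in> V n"
    then have a: "w \<noteq> []" and b: "0 \<notin> set w" using props by auto
    then show "Wt p q u v s t (?g w) = q*v*s*t * Wt p q u v s 1 w"
      unfolding Wt_def asc_snoc[OF a b] des_snoc[OF a b] lrmax_snoc[OF a b] rlmax_snoc[OF a b] lrmin_snoc[OF a b] rlmin_snoc[OF a b] by (simp add: algebra_simps)
  qed
  finally show ?thesis unfolding FF_def by (simp add: sum_distrib_left)
qed


lemma EF:
  "Abs_fps (\<lambda>n. FF p q u v n s t) = 1 + fps_X * (fps_const (u*v*s*t)
      + fps_const (p*u*s*t) * (Abs_fps (\<lambda>n. FF p q u v n 1 t) - 1)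
      + fps_const (q*v*s*t) * (Abs_fps (\<lambda>n. FF p q u v n s 1) - 1))"
proof (rule fps_ext)
  fix n show "fps_nth (Abs_fps (\<lambda>n. FF p q u v n s t)) n = fps_nth (1 + fps_X * (fps_const (u*v*s*t)
      + fps_const (p*u*s*t) * (Abs_fps (\<lambda>n. FF p q u v n 1 t) - 1)
      + fps_const (q*v*s*t) * (Abs_fps (\<lambda>n. FF p q u v n s 1) - 1))) n"
  proof (cases n)
    case 0 then show ?thesis by (simp add: FF0)
  next
    case (Suc m)
    show ?thesis
    proof (cases m)
      case 0 then show ?thesis using Suc by (simp add: FF0 FF1[unfolded One_nat_def])
    next
      case (Suc k)
      then show ?thesis using \<open>n = Suc m\<close> by (simp add: FF_Suc)
    qed
  qed
qed

theorem theorem11: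
  fixes p q u v s t :: "'a::field"
  shows "genfun [2,1,3] [3,1,2] p q u v s t =
    1 + fps_const (u*v*s*t) * fps_X
    + fps_const (p*q*s*t^2*u^2*v^2) * fps_X ^ 3
        / ((-1 + fps_const (p*t*u) * fps_X) * (-1 + fps_const (p*u) * fps_X + fps_const (q*v) * fps_X))
    + fps_const (q*s^2*t*u*v^2) * fps_X ^ 2 / (1 - fps_const (q*s*v) * fps_X)
    + fps_const (p*s*t^2*u^2*v) * fps_X ^ 2 / (1 - fps_const (p*t*u) * fps_X)
    + fps_const (p*q*s^2*t*u^2*v^2) * fps_X ^ 3
        / ((-1 + fps_const (p*u) * fps_X + fps_const (q*v) * fps_X) * (-1 + fps_const (q*s*v) * fps_X))"
proof -
  let ?X = "fps_X :: 'a fps"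
  define K where "K = Abs_fps (\<lambda>n. FF p q u v n 1 1) - 1"
  define G where "G = Abs_fps (\<lambda>n. FF p q u v n 1 t) - 1"
  define H where "H = Abs_fps (\<lambda>n. FF p q u v n s 1) - 1"
  have eK: "K = ?X * (fps_const (u*v) + fps_const (p*u) * K + fps_const (q*v) * K)"
  proof -
    have e: "Abs_fps (\<lambda>n. FF p q u v n 1 1) = 1 + ?X * (fps_const (u*v*1*1)
      + fps_const (p*u*1*1) * (Abs_fps (\<lambda>n. FF p q u v n 1 1) - 1)
      + fps_const (q*v*1*1) * (Abs_fps (\<lambda>n. FF p q u v n 1 1) - 1))" by (rule EF)
    show ?thesis unfolding K_def by (subst (1) e) simp
  qed
  have eG: "G = ?X * (fps_const (u*v*t) + fps_const (p*u*t) * G + fps_const (q*v*t) * K)"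
  proof -
    have e: "Abs_fps (\<lambda>n. FF p q u v n 1 t) = 1 + ?X * (fps_const (u*v*1*t)
      + fps_const (p*u*1*t) * (Abs_fps (\<lambda>n. FF p q u v n 1 t) - 1)
      + fps_const (q*v*1*t) * (Abs_fps (\<lambda>n. FF p q u v n 1 1) - 1))" by (rule EF)
    show ?thesis unfolding K_def G_def by (subst (1) e) simp
  qed
  have eH: "H = ?X * (fps_const (u*v*s) + fps_const (p*u*s) * K + fps_const (q*v*s) * H)"
  proof -
    have e: "Abs_fps (\<lambda>n. FF p q u v n s 1) = 1 + ?X * (fps_const (u*v*s*1)
      + fps_const (p*u*s*1) * (Abs_fps (\<lambda>n. FF p q u v n 1 1) - 1)
      + fps_const (q*v*s*1) * (Abs_fps (\<lambda>n. FF p q u v n s 1) - 1))" by (rule EF)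
    show ?thesis unfolding K_def H_def by (subst (1) e) simp
  qed
  have eF: "genfun [2,1,3] [3,1,2] p q u v s t = 1 + ?X * (fps_const (u*v*s*t)
      + fps_const (p*u*s*t) * G + fps_const (q*v*s*t) * H)"
    unfolding genfun_FF G_def H_def by (rule EF)
  define D1 where "D1 = 1 - fps_const (p*t*u) * ?X"
  define D2 where "D2 = 1 - fps_const (p*u) * ?X - fps_const (q*v) * ?X"
  define D3 where "D3 = 1 - fps_const (q*s*v) * ?X"
  have d1: "D1 * inverse D1 = 1" by (rule inverse_mult_eq_1') (simp add: D1_def)
  have d2: "D2 * inverse D2 = 1" by (rule inverse_mult_eq_1') (simp add: D2_def)
  have d3: "D3 * inverse D3 = 1" by (rule inverse_mult_eq_1') (simp add: D3_def)
  have "K * D2 = fps_const (u*v) * ?X"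
  proof -
    have "K * D2 = K - ?X * (fps_const (p*u) * K + fps_const (q*v) * K)"
      unfolding D2_def by (simp add: algebra_simps)
    also have "\<dots> = fps_const (u*v) * ?X" by (subst (1) eK) (simp add: algebra_simps)
    finally show ?thesis .
  qed
  then have K: "K = fps_const (u*v) * ?X * inverse D2"
    by (metis d2 mult.assoc mult_1_right)
  have "G * D1 = ?X * (fps_const (u*v*t) + fps_const (q*v*t) * K)"
  proof -
    have "G * D1 = G - ?X * (fps_const (p*u*t) * G)"
      unfolding D1_def by (simp add: algebra_simps)
    also have "\<dots> = ?X * (fps_const (u*v*t) + fps_const (q*v*t) * K)"
      by (subst (1) eG) (simp add: algebra_simps)
    finally show ?thesis .
  qed
  then have G: "G = ?X * (fps_const (u*v*t) + fps_const (q*v*t) * K) * inverse D1"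
    by (metis d1 mult.assoc mult_1_right)
  have "H * D3 = ?X * (fps_const (u*v*s) + fps_const (p*u*s) * K)"
  proof -
    have "H * D3 = H - ?X * (fps_const (q*v*s) * H)"
      unfolding D3_def by (simp add: algebra_simps)
    also have "\<dots> = ?X * (fps_const (u*v*s) + fps_const (p*u*s) * K)"
      by (subst (1) eH) (simp add: algebra_simps)
    finally show ?thesis .
  qed
  then have H: "H = ?X * (fps_const (u*v*s) + fps_const (p*u*s) * K) * inverse D3"
    by (metis d3 mult.assoc mult_1_right)
  have m1: "-1 + fps_const (p*t*u) * ?X = - D1" unfolding D1_def by simp
  have m2: "-1 + fps_const (p*u) * ?X + fps_const (q*v) * ?X = - D2" unfolding D2_def by simp
  have m3: "-1 + fps_const (q*s*v) * ?X = - D3" unfolding D3_def by simp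
  have z: "fps_nth (D1 * D2) 0 \<noteq> 0" "fps_nth (D2 * D3) 0 \<noteq> 0" "fps_nth D1 0 \<noteq> 0" "fps_nth D3 0 \<noteq> 0"
    unfolding D1_def D2_def D3_def by simp_all
  have RHS: "1 + fps_const (u*v*s*t) * fps_X
    + fps_const (p*q*s*t^2*u^2*v^2) * fps_X ^ 3
        / ((-1 + fps_const (p*t*u) * fps_X) * (-1 + fps_const (p*u) * fps_X + fps_const (q*v) * fps_X))
    + fps_const (q*s^2*t*u*v^2) * fps_X ^ 2 / (1 - fps_const (q*s*v) * fps_X)
    + fps_const (p*s*t^2*u^2*v) * fps_X ^ 2 / (1 - fps_const (p*t*u) * fps_X)
    + fps_const (p*q*s^2*t*u^2*v^2) * fps_X ^ 3
        / ((-1 + fps_const (p*u) * fps_X + fps_const (q*v) * fps_X) * (-1 + fps_const (q*s*v) * fps_X))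
    = 1 + fps_const (u*v*s*t) * fps_X
    + fps_const (p*q*s*t^2*u^2*v^2) * fps_X ^ 3 * (inverse D1 * inverse D2)
    + fps_const (q*s^2*t*u*v^2) * fps_X ^ 2 * inverse D3
    + fps_const (p*s*t^2*u^2*v) * fps_X ^ 2 * inverse D1
    + fps_const (p*q*s^2*t*u^2*v^2) * fps_X ^ 3 * (inverse D2 * inverse D3)"
    unfolding m1 m2 m3 D1_def[symmetric] D3_def[symmetric] minus_mult_minus
    by (simp add: fps_divide_unit z fps_divide_unit[OF z(1)] fps_divide_unit[OF z(2)] fps_inverse_mult)
  show ?thesis
    unfolding eF RHS G H K
    by (simp del: fps_const_mult fps_const_power
        add: fps_const_mult[symmetric] fps_const_power[symmetric] power2_eq_square power3_eq_cube algebra_simps)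
qed

end
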